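(* Let $\bar w=\{w_1,\dots,w_N\}$ be a set of complex numbers and let $\mathcal F(\bar z)$ be a symmetric function of $n\le N$ variables $z_1,\dots,z_n$, holomorphic in each $z_j$ in a domain containing the points $\bar w$. Define $$\langle\mathcal F\rangle=\frac{1}{(2\pi i c)^n n!}\oint_{\bar w}\frac{g(\bar z,\bar w)\,d\bar z}{\Delta_n(\bar z)\Delta'_n(\bar z)}\mathcal F(\bar z),$$ where $d\bar z=dz_1\cdots dz_n$ and the contour for each $z_j$ encircles the points $\bar w$ anticlockwise and contains no other singularities of the integrand. Then $$\langle\mathcal F\rangle=\sum g(\bar w_{\rm I},\bar w_{\rm II})\,\mathcal F(\bar w_{\rm I}),$$ the sum being over partitions $\bar w\Rightarrow\{\bar w_{\rm I},\bar w_{\rm II}\}$ with $\#\bar w_{\rm I}=n$.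
   Context: Fix $c\neq0$ and $g(u,v)=\frac{c}{u-v}$. For sets, $g(\bar z,\bar w)=\prod_{z_j\in\bar z}\prod_{w_k\in\bar w}g(z_j,w_k)$ (empty product $=1$). $\Delta'_n(\bar z)=\prod_{j<k}g(z_j,z_k)$, $\Delta_n(\bar z)=\prod_{j>k}g(z_j,z_k)$. *)

theory Defs
  imports "HOL-Complex_Analysis.Complex_Analysis"
begin

definition gfun :: "complex \<Rightarrow> complex \<Rightarrow> complex \<Rightarrow> complex" where
  "gfun c u v = c / (u - v)"

definition gset :: "complex \<Rightarrow> complex set \<Rightarrow> complex set \<Rightarrow> complex" where
  "gset c A B = (\<Prod>a\<in>A. \<Prod>b\<in>B. gfun c a b)"

definition glist :: "complex \<Rightarrow> complex list \<Rightarrow> complex set \<Rightarrow> complex" where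
  "glist c zs B = (\<Prod>j<length zs. \<Prod>b\<in>B. gfun c (zs ! j) b)"

definition Delta' :: "complex \<Rightarrow> complex list \<Rightarrow> complex" where
  "Delta' c zs = (\<Prod>(j,k)\<in>{(j,k). j < k \<and> k < length zs}. gfun c (zs ! j) (zs ! k))"

definition Delta :: "complex \<Rightarrow> complex list \<Rightarrow> complex" where
  "Delta c zs = (\<Prod>(j,k)\<in>{(j,k). k < j \<and> j < length zs}. gfun c (zs ! j) (zs ! k))"

text \<open>Iterated contour integral over n variables z_0..z_{n-1}; variable j runs over
  the closed path gam j.  The last variable is integrated outermost.\<close>
fun cint_iter :: "(nat \<Rightarrow> real \<Rightarrow> complex) \<Rightarrow> nat \<Rightarrow> (complex list \<Rightarrow> complex) \<Rightarrow> complex" where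
  "cint_iter gam 0 f = f []"
| "cint_iter gam (Suc k) f =
     contour_integral (gam k) (\<lambda>x. cint_iter gam k (\<lambda>xs. f (xs @ [x])))"

definition bracket :: "complex \<Rightarrow> complex set \<Rightarrow> nat \<Rightarrow> (nat \<Rightarrow> real \<Rightarrow> complex)
    \<Rightarrow> (complex list \<Rightarrow> complex) \<Rightarrow> complex" where
  "bracket c W n gam F =
     1 / ((2 * pi * \<i> * c) ^ n * of_nat (fact n)) *
     cint_iter gam n (\<lambda>zs. glist c zs W / (Delta c zs * Delta' c zs) * F zs)"

end

theory Submission imports Defs "HOL-Combinatorics.Multiset_Permutations" begin

definition Aw :: "complex \<Rightarrow> complex set \<Rightarrow> complex \<Rightarrow> complex" where
  "Aw c W w = c * (\<Prod>w'\<in>W-{w}. gfun c w w')"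

lemma single_int:
  assumes "open S" "connected S" "finite W" "W \<subseteq> S" "g holomorphic_on S" "valid_path \<gamma>"
    "pathfinish \<gamma> = pathstart \<gamma>" "path_image \<gamma> \<subseteq> S - W" "\<forall>w\<in>W. winding_number \<gamma> w = 1"
    "\<forall>x. x\<notin>S \<longrightarrow> winding_number \<gamma> x = 0"
  shows "((\<lambda>x. (\<Prod>w\<in>W. gfun c x w) * g x) has_contour_integral
            (2*pi*\<i> * (\<Sum>w\<in>W. Aw c W w * g w))) \<gamma>"
proof -
  define f where "f = (\<lambda>x. (\<Prod>w\<in>W. gfun c x w) * g x)"
  have hol: "f holomorphic_on S - W"
    unfolding f_def gfun_def
    by (intro holomorphic_intros holomorphic_on_prod holomorphic_on_subset[OF assms(5)]) auto
  have op: "open (S - W)" using assms by (simp add: open_Diff finite_imp_closed)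
  have int: "f contour_integrable_on \<gamma>"
    by (rule contour_integrable_holomorphic_simple[OF hol op assms(6,8)])
  have res: "residue f w = Aw c W w * g w" if w: "w \<in> W" for w
  proof -
    have fe: "f = (\<lambda>x. (c * (\<Prod>w'\<in>W-{w}. gfun c x w') * g x) / (x - w))"
      unfolding f_def using assms(3) w
      by (auto simp: prod.remove[of W w] gfun_def intro!: ext)
    have op2: "open (S - (W - {w}))" using assms by (simp add: open_Diff finite_imp_closed)
    have "(\<lambda>x. c * (\<Prod>w'\<in>W-{w}. gfun c x w') * g x) holomorphic_on S - (W - {w})"
      unfolding gfun_def
      by (intro holomorphic_intros holomorphic_on_prod holomorphic_on_subset[OF assms(5)]) auto
    then have "residue f w = c * (\<Prod>w'\<in>W-{w}. gfun c w w') * g w"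
      unfolding fe using residue_simple[OF op2] w assms(4) by blast
    then show ?thesis by (simp add: Aw_def)
  qed
  have "contour_integral \<gamma> f = 2 * pi * \<i> * (\<Sum>p\<in>W. winding_number \<gamma> p * residue f p)"
    by (rule Residue_theorem[OF assms(1,2,3) hol assms(6,7,8)]) (use assms(10) in auto)
  also have "\<dots> = 2*pi*\<i> * (\<Sum>w\<in>W. Aw c W w * g w)"
    using assms(9) res by simp
  finally show ?thesis using has_contour_integral_integral[OF int] unfolding f_def by simp
qed

lemma glist_snoc: "glist c (xs@[x]) W = glist c xs W * (\<Prod>w\<in>W. gfun c x w)"
  unfolding glist_def by (simp add: nth_append)

definition Lk :: "complex set \<Rightarrow> nat \<Rightarrow> complex list set" where
  "Lk W k = {xs. set xs \<subseteq> W \<and> length xs = k}"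

lemma Lk_finite: "finite W \<Longrightarrow> finite (Lk W k)"
  unfolding Lk_def by (rule finite_lists_length_eq)

lemma sum_Lk_Suc:
  assumes "finite W"
  shows "(\<Sum>ys\<in>Lk W (Suc k). f ys) = (\<Sum>xs\<in>Lk W k. \<Sum>w\<in>W. f (xs @ [w]))"
proof -
  have inj: "inj_on (\<lambda>(xs,w). xs @ [w]) (Lk W k \<times> W)"
    by (auto simp: inj_on_def)
  have im: "(\<lambda>(xs,w). xs @ [w]) ` (Lk W k \<times> W) = Lk W (Suc k)"
  proof
    show "Lk W (Suc k) \<subseteq> (\<lambda>(xs,w). xs @ [w]) ` (Lk W k \<times> W)"
    proof
      fix ys assume "ys \<in> Lk W (Suc k)"
      then have ys: "set ys \<subseteq> W" "length ys = Suc k" by (auto simp: Lk_def)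
      then have "ys \<noteq> []" by auto
      then have "ys = butlast ys @ [last ys]" by simp
      moreover have "butlast ys \<in> Lk W k" "last ys \<in> W" using ys
        by (auto simp: Lk_def dest: in_set_butlastD) (metis last_in_set list.size(3) nat.distinct(1) subsetD)
      moreover note \<open>ys \<noteq> []\<close>
      ultimately show "ys \<in> (\<lambda>(xs,w). xs @ [w]) ` (Lk W k \<times> W)"
        by (metis (no_types, lifting) SigmaI image_eqI old.prod.case)
    qed
  qed (auto simp: Lk_def)
  have "(\<Sum>ys\<in>Lk W (Suc k). f ys) = (\<Sum>p\<in>Lk W k \<times> W. f ((\<lambda>(xs,w). xs @ [w]) p))"
    using sum.reindex[OF inj, of f] im by simp
  also have "\<dots> = (\<Sum>xs\<in>Lk W k. \<Sum>w\<in>W. f (xs @ [w]))"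
    by (simp add: sum.cartesian_product split_def)
  finally show ?thesis .
qed

lemma main_iter:
  assumes S: "open S" "connected S" "finite W" "W \<subseteq> S"
    and paths: "\<And>j. j < k \<Longrightarrow> valid_path (gam j) \<and> pathfinish (gam j) = pathstart (gam j)
                 \<and> path_image (gam j) \<subseteq> S - W
                 \<and> (\<forall>w\<in>W. winding_number (gam j) w = 1)
                 \<and> (\<forall>x. x \<notin> S \<longrightarrow> winding_number (gam j) x = 0)"
    and holoG: "\<And>xs j. length xs = k \<Longrightarrow> set xs \<subseteq> S \<Longrightarrow> j < k \<Longrightarrow>
                 (\<lambda>x. G (xs[j := x])) holomorphic_on S"
  shows "cint_iter gam k (\<lambda>xs. glist c xs W * G xs) =
           (2*pi*\<i>)^k * (\<Sum>xs\<in>Lk W k. (\<Prod>j<k. Aw c W (xs!j)) * G xs)"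
  using paths holoG
proof (induction k arbitrary: G)
  case 0
  have "Lk W 0 = {[]}" by (auto simp: Lk_def)
  then show ?case by (simp add: glist_def)
next
  case (Suc k)
  define P1 where "P1 = (\<lambda>x. \<Prod>w\<in>W. gfun c x w)"
  have pk: "valid_path (gam k)" "pathfinish (gam k) = pathstart (gam k)"
     "path_image (gam k) \<subseteq> S - W" "\<forall>w\<in>W. winding_number (gam k) w = 1"
     "\<forall>x. x \<notin> S \<longrightarrow> winding_number (gam k) x = 0" using Suc.prems(1)[of k] by auto
  have eq1: "cint_iter gam (Suc k) (\<lambda>xs. glist c xs W * G xs) =
     contour_integral (gam k) (\<lambda>x. cint_iter gam k (\<lambda>xs. glist c xs W * (P1 x * G (xs@[x]))))"
    by (simp add: glist_snoc P1_def mult.assoc)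
  have eq2: "cint_iter gam k (\<lambda>xs. glist c xs W * (P1 x * G (xs@[x]))) =
      (2*pi*\<i>)^k * (\<Sum>xs\<in>Lk W k. (\<Prod>j<k. Aw c W (xs!j)) * (P1 x * G (xs@[x])))"
    if x: "x \<in> path_image (gam k)" for x
  proof (rule Suc.IH)
    show "\<And>j. j < k \<Longrightarrow> valid_path (gam j) \<and> pathfinish (gam j) = pathstart (gam j)
                 \<and> path_image (gam j) \<subseteq> S - W
                 \<and> (\<forall>w\<in>W. winding_number (gam j) w = 1)
                 \<and> (\<forall>x. x \<notin> S \<longrightarrow> winding_number (gam j) x = 0)"
      using Suc.prems(1) by auto
    fix xs j assume xs: "length xs = k" "set xs \<subseteq> S" "j < k"
    have "x \<in> S" using x pk(3) by auto
    then have "(\<lambda>y. G ((xs@[x])[j := y])) holomorphic_on S"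
      using Suc.prems(2)[of "xs@[x]" j] xs by auto
    then show "(\<lambda>y. P1 x * G ((xs[j := y]) @ [x])) holomorphic_on S"
      using xs by (intro holomorphic_intros) (simp add: list_update_append1)
  qed
  have hg: "(\<lambda>x. G (xs@[x])) holomorphic_on S" if xs: "xs \<in> Lk W k" for xs
  proof -
    have "pathstart (gam k) \<in> S" using pk(3) by auto
    then have "(\<lambda>y. G ((xs@[pathstart (gam k)])[k := y])) holomorphic_on S"
      using Suc.prems(2)[of "xs@[pathstart (gam k)]" k] xs S(4) by (auto simp: Lk_def)
    then show ?thesis using xs by (simp add: Lk_def list_update_append)
  qed
  have hci: "((\<lambda>x. (2*pi*\<i>)^k * (\<Sum>xs\<in>Lk W k. (\<Prod>j<k. Aw c W (xs!j)) * (P1 x * G (xs@[x]))))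
     has_contour_integral
      (2*pi*\<i>)^k * (\<Sum>xs\<in>Lk W k. (\<Prod>j<k. Aw c W (xs!j)) *
         (2*pi*\<i> * (\<Sum>w\<in>W. Aw c W w * G (xs@[w]))))) (gam k)"
    apply (intro has_contour_integral_lmul has_contour_integral_sum Lk_finite S(3))
    unfolding P1_def
    apply (rule single_int[OF S(1,2,3,4) hg pk]) .
  have "cint_iter gam (Suc k) (\<lambda>xs. glist c xs W * G xs) =
     (2*pi*\<i>)^k * (\<Sum>xs\<in>Lk W k. (\<Prod>j<k. Aw c W (xs!j)) *
         (2*pi*\<i> * (\<Sum>w\<in>W. Aw c W w * G (xs@[w]))))"
  proof -
    have "contour_integral (gam k) (\<lambda>x. cint_iter gam k (\<lambda>xs. glist c xs W * (P1 x * G (xs@[x])))) =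
       contour_integral (gam k) (\<lambda>x. (2*pi*\<i>)^k * (\<Sum>xs\<in>Lk W k. (\<Prod>j<k. Aw c W (xs!j)) * (P1 x * G (xs@[x]))))"
      by (rule contour_integral_cong) (simp_all add: eq2)
    then show ?thesis unfolding eq1 using contour_integral_unique[OF hci] by simp
  qed
  also have "\<dots> = (2*pi*\<i>)^Suc k * (\<Sum>xs\<in>Lk W k. \<Sum>w\<in>W. (\<Prod>j<Suc k. Aw c W ((xs@[w])!j)) * G (xs@[w]))"
  proof -
    have pe: "(\<Prod>j<Suc k. Aw c W ((xs@[w])!j)) = (\<Prod>j<k. Aw c W (xs!j)) * Aw c W w"
      if "xs \<in> Lk W k" for xs w
      using that by (simp add: Lk_def nth_append)
    then have "(\<Prod>j<k. Aw c W (xs!j)) * (2*pi*\<i> * (\<Sum>w\<in>W. Aw c W w * G (xs@[w]))) =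
       2*pi*\<i> * (\<Sum>w\<in>W. (\<Prod>j<Suc k. Aw c W ((xs@[w])!j)) * G (xs@[w]))"
      if "xs \<in> Lk W k" for xs
    proof -
      have "(\<Prod>j<k. Aw c W (xs!j)) * (2*pi*\<i> * (\<Sum>w\<in>W. Aw c W w * G (xs@[w]))) =
         2*pi*\<i> * (\<Sum>w\<in>W. (\<Prod>j<k. Aw c W (xs!j)) * (Aw c W w * G (xs@[w])))"
        by (simp only: sum_distrib_left mult.left_commute)
      also have "\<dots> = 2*pi*\<i> * (\<Sum>w\<in>W. (\<Prod>j<Suc k. Aw c W ((xs@[w])!j)) * G (xs@[w]))"
        using pe[OF that] by (simp only: mult.assoc)
      finally show ?thesis .
    qed
    then have "(\<Sum>xs\<in>Lk W k. (\<Prod>j<k. Aw c W (xs!j)) * (2*pi*\<i> * (\<Sum>w\<in>W. Aw c W w * G (xs@[w])))) =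
       (\<Sum>xs\<in>Lk W k. 2*pi*\<i> * (\<Sum>w\<in>W. (\<Prod>j<Suc k. Aw c W ((xs@[w])!j)) * G (xs@[w])))"
      by (rule sum.cong[OF refl])
    also have "\<dots> = 2*pi*\<i> * (\<Sum>xs\<in>Lk W k. (\<Sum>w\<in>W. (\<Prod>j<Suc k. Aw c W ((xs@[w])!j)) * G (xs@[w])))"
      by (simp only: sum_distrib_left)
    finally have L: "(\<Sum>xs\<in>Lk W k. (\<Prod>j<k. Aw c W (xs!j)) * (2*pi*\<i> * (\<Sum>w\<in>W. Aw c W w * G (xs@[w])))) =
        2*pi*\<i> * (\<Sum>xs\<in>Lk W k. (\<Sum>w\<in>W. (\<Prod>j<Suc k. Aw c W ((xs@[w])!j)) * G (xs@[w])))" .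
    show ?thesis unfolding L by (simp only: power_Suc mult_ac)

  qed
  also have "\<dots> = (2*pi*\<i>)^Suc k * (\<Sum>ys\<in>Lk W (Suc k). (\<Prod>j<Suc k. Aw c W (ys!j)) * G ys)"
    by (simp add: sum_Lk_Suc[OF S(3)])
  finally show ?case .
qed

lemma finite_pairs1: "finite {(j,k). j < k \<and> k < (m::nat)}"
  by (rule finite_subset[of _ "{..<m} \<times> {..<m}"]) auto
lemma finite_pairs2: "finite {(j,k). k < j \<and> j < (m::nat)}"
  by (rule finite_subset[of _ "{..<m} \<times> {..<m}"]) auto

lemma inv_Delta: "inverse (Delta c zs) =
   (\<Prod>(j,k)\<in>{(j,k). k < j \<and> j < length zs}. (zs ! j - zs ! k) / c)"
  unfolding Delta_def prod_inversef[symmetric]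
  by (intro prod.cong refl) (auto simp: gfun_def)

lemma inv_Delta': "inverse (Delta' c zs) =
   (\<Prod>(j,k)\<in>{(j,k). j < k \<and> k < length zs}. (zs ! j - zs ! k) / c)"
  unfolding Delta'_def prod_inversef[symmetric]
  by (intro prod.cong refl) (auto simp: gfun_def)

lemma nth_upd_holo: "l < length xs \<Longrightarrow> (\<lambda>y. xs[l:=y] ! j) holomorphic_on S"
  by (cases "l = j") (auto simp: nth_list_update)

lemma holo_invDD:
  assumes "l < length xs"
  shows "(\<lambda>y. inverse (Delta c (xs[l:=y]) * Delta' c (xs[l:=y]))) holomorphic_on S"
proof -
  have "(\<lambda>y. inverse (Delta c (xs[l:=y]) * Delta' c (xs[l:=y]))) =
     (\<lambda>y. (\<Prod>(j,k)\<in>{(j,k). k < j \<and> j < length xs}. (xs[l:=y] ! j - xs[l:=y] ! k) / c) *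
          (\<Prod>(j,k)\<in>{(j,k). j < k \<and> k < length xs}. (xs[l:=y] ! j - xs[l:=y] ! k) / c))"
    (is "_ = ?R") by (simp add: inv_Delta inv_Delta' inverse_mult_distrib)
  moreover have "?R holomorphic_on S"
    using assms
    by (intro holomorphic_intros holomorphic_on_prod)
       (auto split: prod.splits intro!: holomorphic_intros nth_upd_holo)
  ultimately show ?thesis by simp
qed

lemma DD_zero:
  assumes "\<not> distinct zs"
  shows "Delta c zs * Delta' c zs = 0"
proof -
  obtain j k where jk: "j < length zs" "k < length zs" "j \<noteq> k" "zs!j = zs!k"
    using assms by (auto simp: distinct_conv_nth)
  define a b where "a = min j k" and "b = max j k"
  have ab: "a < b" "b < length zs" "zs!a = zs!b" using jk unfolding a_def b_def
    by (auto simp: min_def max_def)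
  have "Delta' c zs = 0"
    unfolding Delta'_def using ab
    by (subst prod_zero_iff[OF finite_pairs1]) (auto simp: gfun_def intro!: bexI[of _ "(a,b)"])
  then show ?thesis by simp
qed

lemma DD_set:
  assumes "distinct zs"
  shows "Delta c zs * Delta' c zs = (\<Prod>a\<in>set zs. \<Prod>b\<in>set zs - {a}. gfun c a b)"
proof -
  let ?m = "length zs"
  let ?P = "{(j,k). j < ?m \<and> k < ?m \<and> j \<noteq> k}"
  have un: "?P = {(j,k). k < j \<and> j < ?m} \<union> {(j,k). j < k \<and> k < ?m}" by auto
  have "Delta c zs * Delta' c zs = (\<Prod>(j,k)\<in>?P. gfun c (zs!j) (zs!k))"
    unfolding Delta_def Delta'_def un
    by (rule prod.union_disjoint[symmetric]) (auto intro: finite_pairs1 finite_pairs2)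
  also have "\<dots> = (\<Prod>p\<in>(\<lambda>(j,k). (zs!j, zs!k)) ` ?P. gfun c (fst p) (snd p))"
  proof (subst prod.reindex)
    show "inj_on (\<lambda>(j,k). (zs!j, zs!k)) ?P"
      using assms by (auto simp: inj_on_def nth_eq_iff_index_eq)
  qed (auto simp: case_prod_beta intro!: prod.cong)
  also have "(\<lambda>(j,k). (zs!j, zs!k)) ` ?P = Sigma (set zs) (\<lambda>a. set zs - {a})"
  proof
    show "(\<lambda>(j,k). (zs!j, zs!k)) ` ?P \<subseteq> Sigma (set zs) (\<lambda>a. set zs - {a})"
      using assms by (auto simp: nth_eq_iff_index_eq)
    show "Sigma (set zs) (\<lambda>a. set zs - {a}) \<subseteq> (\<lambda>(j,k). (zs!j, zs!k)) ` ?P"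
    proof
      fix p assume "p \<in> Sigma (set zs) (\<lambda>a. set zs - {a})"
      then obtain a b where p: "p = (a,b)" "a \<in> set zs" "b \<in> set zs" "a \<noteq> b" by auto
      then obtain j k where "j < ?m" "k < ?m" "zs!j = a" "zs!k = b" by (auto simp: in_set_conv_nth)
      then show "p \<in> (\<lambda>(j,k). (zs!j, zs!k)) ` ?P" using p by (auto intro!: image_eqI[of _ _ "(j,k)"])
    qed
  qed
  also have "(\<Prod>p\<in>Sigma (set zs) (\<lambda>a. set zs - {a}). gfun c (fst p) (snd p)) =
      (\<Prod>a\<in>set zs. \<Prod>b\<in>set zs - {a}. gfun c a b)"
    by (subst prod.Sigma) (auto simp: case_prod_beta)
  finally show ?thesis .
qed

lemma prodA:
  assumes "distinct xs"
  shows "(\<Prod>j<length xs. f (xs!j)) = (\<Prod>a\<in>set xs. f a)"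
proof -
  have "(\<Prod>a\<in>(\<lambda>j. xs!j) ` {..<length xs}. f a) = (\<Prod>j<length xs. f (xs!j))"
    using assms by (subst prod.reindex) (auto simp: inj_on_def nth_eq_iff_index_eq)
  moreover have "(\<lambda>j. xs!j) ` {..<length xs} = set xs" by (auto simp: in_set_conv_nth)
  ultimately show ?thesis by simp
qed

lemma Aw_split:
  assumes "finite W" "I \<subseteq> W" "a \<in> I"
  shows "Aw c W a = c * (\<Prod>b\<in>W-I. gfun c a b) * (\<Prod>b\<in>I-{a}. gfun c a b)"
proof -
  have "W - {a} = (W - I) \<union> (I - {a})" using assms by auto
  then have "(\<Prod>b\<in>W-{a}. gfun c a b) = (\<Prod>b\<in>W-I. gfun c a b) * (\<Prod>b\<in>I-{a}. gfun c a b)"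
    using assms by (simp add: prod.union_disjoint finite_subset Diff_Int_distrib2 Int_Diff)
      (subst prod.union_disjoint, auto intro: finite_subset)
  then show ?thesis unfolding Aw_def by (simp add: mult.assoc)
qed

lemma term_eq:
  assumes "c \<noteq> 0" "finite W" "distinct xs" "set xs \<subseteq> W"
  shows "(\<Prod>j<length xs. Aw c W (xs!j)) * (v * inverse (Delta c xs * Delta' c xs)) =
         c ^ length xs * gset c (set xs) (W - set xs) * v"
proof -
  let ?I = "set xs"
  define DI where "DI = (\<Prod>a\<in>?I. \<Prod>b\<in>?I - {a}. gfun c a b)"
  have DI0: "DI \<noteq> 0" unfolding DI_def using assms(1) by (auto simp: gfun_def)
  have "(\<Prod>j<length xs. Aw c W (xs!j)) = (\<Prod>a\<in>?I. Aw c W a)" by (rule prodA[OF assms(3)])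
  also have "\<dots> = (\<Prod>a\<in>?I. c * (\<Prod>b\<in>W-?I. gfun c a b) * (\<Prod>b\<in>?I-{a}. gfun c a b))"
    using Aw_split[OF assms(2,4)] by (intro prod.cong) auto
  also have "\<dots> = c ^ length xs * gset c ?I (W - ?I) * DI"
    unfolding DI_def gset_def prod.distrib using distinct_card[OF assms(3)] by simp
  moreover have dd: "Delta c xs * Delta' c xs = DI" unfolding DI_def by (rule DD_set[OF assms(3)])
  ultimately show ?thesis using DI0 by (simp add: field_simps)
qed

theorem propositionB1:
  fixes c :: complex and W :: "complex set" and n :: nat
    and F :: "complex list \<Rightarrow> complex" and S :: "complex set"
    and gam :: "nat \<Rightarrow> real \<Rightarrow> complex"
  assumes "c \<noteq> 0"
    and "finite W" and "n \<le> card W"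
    and "open S" and "connected S" and "W \<subseteq> S"
    and symm: "\<And>xs ys. length xs = n \<Longrightarrow> mset ys = mset xs \<Longrightarrow> F ys = F xs"
    and holo: "\<And>xs j. length xs = n \<Longrightarrow> set xs \<subseteq> S \<Longrightarrow> j < n \<Longrightarrow>
                 (\<lambda>x. F (xs[j := x])) holomorphic_on S"
    and paths: "\<And>j. j < n \<Longrightarrow> valid_path (gam j) \<and> pathfinish (gam j) = pathstart (gam j)
                 \<and> path_image (gam j) \<subseteq> S - W
                 \<and> (\<forall>w\<in>W. winding_number (gam j) w = 1)
                 \<and> (\<forall>x. x \<notin> S \<longrightarrow> winding_number (gam j) x = 0)"
  shows "bracket c W n gam F =
    (\<Sum>I | I \<subseteq> W \<and> card I = n.
        gset c I (W - I) * F (SOME xs. distinct xs \<and> set xs = I))"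
proof -
  define Q where "Q = (\<lambda>zs. inverse (Delta c zs * Delta' c zs))"
  have fe: "(\<lambda>zs. glist c zs W / (Delta c zs * Delta' c zs) * F zs) =
            (\<lambda>zs. glist c zs W * (F zs * Q zs))"
    by (simp add: Q_def divide_inverse mult_ac)
  have ci: "cint_iter gam n (\<lambda>zs. glist c zs W * (F zs * Q zs)) =
      (2*pi*\<i>)^n * (\<Sum>xs\<in>Lk W n. (\<Prod>j<n. Aw c W (xs!j)) * (F xs * Q xs))"
  proof (rule main_iter[OF assms(4,5,2,6)])
    show "\<And>j. j < n \<Longrightarrow> valid_path (gam j) \<and> pathfinish (gam j) = pathstart (gam j)
                 \<and> path_image (gam j) \<subseteq> S - W
                 \<and> (\<forall>w\<in>W. winding_number (gam j) w = 1)
                 \<and> (\<forall>x. x \<notin> S \<longrightarrow> winding_number (gam j) x = 0)" by (rule paths)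
    fix xs j assume xs: "length xs = n" "set xs \<subseteq> S" "j < n"
    show "(\<lambda>x. F (xs[j := x]) * Q (xs[j := x])) holomorphic_on S"
      unfolding Q_def using xs
      by (intro holomorphic_on_mult holo holo_invDD) auto
  qed
  define D where "D = {xs \<in> Lk W n. distinct xs}"
  define T where "T = {I. I \<subseteq> W \<and> card I = n}"
  define h where "h = (\<lambda>xs. (\<Prod>j<n. Aw c W (xs!j)) * (F xs * Q xs))"
  have finL: "finite (Lk W n)" by (rule Lk_finite[OF assms(2)])
  have s1: "(\<Sum>xs\<in>Lk W n. h xs) = (\<Sum>xs\<in>D. h xs)"
  proof (rule sum.mono_neutral_right[OF finL])
    show "D \<subseteq> Lk W n" by (auto simp: D_def)
    show "\<forall>i\<in>Lk W n - D. h i = 0"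
    proof
      fix xs assume "xs \<in> Lk W n - D"
      then have "\<not> distinct xs" by (auto simp: D_def)
      then have "Delta c xs * Delta' c xs = 0" by (rule DD_zero)
      then show "h xs = 0" unfolding h_def Q_def by simp
    qed
  qed
  have finD: "finite D" using finL by (auto simp: D_def)
  have finT: "finite T" unfolding T_def using assms(2) by auto
  have s2: "(\<Sum>xs\<in>D. h xs) = (\<Sum>I\<in>T. \<Sum>xs\<in>{xs\<in>D. set xs = I}. h xs)"
    by (rule sum.group[OF finD finT, symmetric])
       (auto simp: D_def T_def Lk_def distinct_card)
  have s3: "(\<Sum>xs\<in>{xs\<in>D. set xs = I}. h xs) =
      of_nat (fact n) * (c ^ n * gset c I (W - I) * F (SOME xs. distinct xs \<and> set xs = I))"
    if I: "I \<in> T" for I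
  proof -
    have perm: "{xs\<in>D. set xs = I} = permutations_of_set I"
      using I by (auto simp: D_def T_def Lk_def permutations_of_set_def distinct_card)
    have finI: "finite I" using I assms(2) by (auto simp: T_def intro: finite_subset)
    obtain ys where ys: "distinct ys" "set ys = I" using finite_distinct_list[OF finI] by blast
    have some: "distinct (SOME xs. distinct xs \<and> set xs = I) \<and> set (SOME xs. distinct xs \<and> set xs = I) = I"
      by (rule someI[of _ ys]) (use ys in auto)
    have "h xs = c ^ n * gset c I (W - I) * F (SOME xs. distinct xs \<and> set xs = I)"
      if xs: "xs \<in> permutations_of_set I" for xs
    proof -
      have xs': "distinct xs" "set xs = I" "length xs = n"
        using xs I by (auto simp: permutations_of_set_def T_def distinct_card)
      have "h xs = c ^ length xs * gset c (set xs) (W - set xs) * F xs"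
        unfolding h_def Q_def xs'(3)[symmetric]
        by (rule term_eq[OF assms(1,2) xs'(1)]) (use xs' I in \<open>auto simp: T_def\<close>)
      moreover have "F (SOME xs. distinct xs \<and> set xs = I) = F xs"
        by (rule symm[OF xs'(3)]) (use some xs' in \<open>simp add: set_eq_iff_mset_eq_distinct[symmetric]\<close>)
      ultimately show ?thesis using xs' by simp
    qed
    then have "(\<Sum>xs\<in>{xs\<in>D. set xs = I}. h xs) =
       (\<Sum>xs\<in>permutations_of_set I. c ^ n * gset c I (W - I) * F (SOME xs. distinct xs \<and> set xs = I))"
      unfolding perm by (rule sum.cong[OF refl])
    also have "\<dots> = of_nat (fact n) * (c ^ n * gset c I (W - I) * F (SOME xs. distinct xs \<and> set xs = I))"
      using finI I by (simp add: T_def)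
    finally show ?thesis .
  qed
  have "bracket c W n gam F = 1 / ((2 * pi * \<i> * c) ^ n * of_nat (fact n)) *
      ((2*pi*\<i>)^n * (\<Sum>I\<in>T. of_nat (fact n) * (c ^ n * gset c I (W - I) * F (SOME xs. distinct xs \<and> set xs = I))))"
    unfolding bracket_def fe ci using s1 s2 s3 by (simp add: h_def)
  also have "\<dots> = (\<Sum>I\<in>T. gset c I (W - I) * F (SOME xs. distinct xs \<and> set xs = I))"
    using assms(1) by (simp add: sum_distrib_left[symmetric] power_mult_distrib field_simps)
  finally show ?thesis by (simp add: T_def)
qed

end
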